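(* Let $p$ and $r$ be states. Then $r$ is an extreme point of the convex set $p^{TP}=\{Tp: T\in TP(d)\}$ if and only if $\beta(r)$ is tightly thermomajorized by $\beta(p)$.
   Context: Fix an integer $d\ge 2$, an inverse temperature $\beta\in(0,\infty)$ and pairwise distinct real numbers $E_0=0,E_1,\dots,E_{d-1}$. Put $q_{m,n}=e^{-\beta(E_m-E_n)}$, $Z=\sum_j q_{j,0}$, and $g_i=q_{i,0}/Z$ (Gibbs vector). A state is a probability vector $p\in\mathbb{R}^d$. $TP(d)$ is the set of $d\times d$ real matrices with non-negative entries, columns summing to $1$, and $Tg=g$. Thermomajorization curve: for a state $p$ choose a permutation $\pi$ of $\{0,\dots,d-1\}$ with $p_{\pi(0)}/g_{\pi(0)}\ge p_{\pi(1)}/g_{\pi(1)}\ge\dots\ge p_{\pi(d-1)}/g_{\pi(d-1)}$ (the tuple $(\pi(0),\dots,\pi(d-1))$ is called a $\beta$-order of $p$). Let $x_k=\sum_{i\le k}g_{\pi(i)}$, $y_k=\sum_{i\le k}p_{\pi(i)}$. The curve $\beta(p)$ is the graph of the concave piecewise-linear function on $[0,1]$ through $(0,0),(x_0,y_0),\dots,(x_{d-1},y_{d-1})=(1,1)$ (it does not depend on the choice of $\beta$-order); its slopes are the numbers $p_i/g_i$. The elbows of $\beta(p)$ are the points $(x_k,y_k)$, $k=0,\dots,d-2$. $\beta(p)$ tightly thermomajorizes $\beta(r)$ (equivalently $\beta(r)$ is tightly thermomajorized by $\beta(p)$) if every elbow $(x,y)$ of $\beta(r)$ lies on $\beta(p)$,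 i.e. $y=\beta(p)(x)$ where $\beta(p)(\cdot)$ denotes the function whose graph is the curve. *)

theory Defs
  imports "HOL-Analysis.Analysis"
begin

text \<open>Vectors of length d are modelled as functions nat \<Rightarrow> real, indices 0..d-1;
  d x d matrices as nat \<Rightarrow> nat \<Rightarrow> real (entry T i j = row i, column j).\<close>

definition qfac :: "real \<Rightarrow> (nat \<Rightarrow> real) \<Rightarrow> nat \<Rightarrow> nat \<Rightarrow> real" where
  "qfac \<beta> E m n = exp (- \<beta> * (E m - E n))"

definition partfun :: "nat \<Rightarrow> real \<Rightarrow> (nat \<Rightarrow> real) \<Rightarrow> real" where
  "partfun d \<beta> E = (\<Sum>j<d. qfac \<beta> E j 0)"

definition gibbs :: "nat \<Rightarrow> real \<Rightarrow> (nat \<Rightarrow> real) \<Rightarrow> nat \<Rightarrow> real" where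
  "gibbs d \<beta> E i = (if i < d then qfac \<beta> E i 0 / partfun d \<beta> E else 0)"

definition is_state :: "nat \<Rightarrow> (nat \<Rightarrow> real) \<Rightarrow> bool" where
  "is_state d p \<longleftrightarrow> (\<forall>i<d. 0 \<le> p i) \<and> (\<Sum>i<d. p i) = 1 \<and> (\<forall>i\<ge>d. p i = 0)"

definition TP :: "nat \<Rightarrow> (nat \<Rightarrow> real) \<Rightarrow> (nat \<Rightarrow> nat \<Rightarrow> real) set" where
  "TP d g = {T. (\<forall>i<d. \<forall>j<d. 0 \<le> T i j)
              \<and> (\<forall>j<d. (\<Sum>i<d. T i j) = 1)
              \<and> (\<forall>i<d. (\<Sum>j<d. T i j * g j) = g i)}"

definition mat_app :: "nat \<Rightarrow> (nat \<Rightarrow> nat \<Rightarrow> real) \<Rightarrow> (nat \<Rightarrow> real) \<Rightarrow> nat \<Rightarrow> real" where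
  "mat_app d T p = (\<lambda>i. if i < d then (\<Sum>j<d. T i j * p j) else 0)"

definition TP_orbit :: "nat \<Rightarrow> (nat \<Rightarrow> real) \<Rightarrow> (nat \<Rightarrow> real) \<Rightarrow> (nat \<Rightarrow> real) set" where
  "TP_orbit d g p = {mat_app d T p | T. T \<in> TP d g}"

definition is_extreme_point :: "(nat \<Rightarrow> real) \<Rightarrow> (nat \<Rightarrow> real) set \<Rightarrow> bool" where
  "is_extreme_point x S \<longleftrightarrow> x \<in> S \<and>
     \<not> (\<exists>a\<in>S. \<exists>b\<in>S. a \<noteq> b \<and> (\<exists>u::real. 0 < u \<and> u < 1 \<and> x = (\<lambda>i. (1 - u) * a i + u * b i)))"

definition beta_order :: "nat \<Rightarrow> (nat \<Rightarrow> real) \<Rightarrow> (nat \<Rightarrow> real) \<Rightarrow> (nat \<Rightarrow> nat) \<Rightarrow> bool" where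
  "beta_order d g p \<pi> \<longleftrightarrow> bij_betw \<pi> {..<d} {..<d} \<and>
     (\<forall>k. Suc k < d \<longrightarrow> p (\<pi> (Suc k)) / g (\<pi> (Suc k)) \<le> p (\<pi> k) / g (\<pi> k))"

definition elbow_x :: "(nat \<Rightarrow> real) \<Rightarrow> (nat \<Rightarrow> nat) \<Rightarrow> nat \<Rightarrow> real" where
  "elbow_x g \<pi> k = (\<Sum>i\<le>k. g (\<pi> i))"

definition elbow_y :: "(nat \<Rightarrow> real) \<Rightarrow> (nat \<Rightarrow> nat) \<Rightarrow> nat \<Rightarrow> real" where
  "elbow_y p \<pi> k = (\<Sum>i\<le>k. p (\<pi> i))"

text \<open>The function beta(p)(.) on [0,1]: piecewise-linear interpolation of the points
  (0,0), (x_0,y_0), ..., (x_{d-1},y_{d-1}) for a chosen beta-order of p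
  (the paper notes it does not depend on the choice).  Here X k = sum_{i<k} g_(pi i),
  so X 0 = 0 and X (Suc k) = x_k; on [X k, X (k+1)] the function interpolates linearly.\<close>
definition beta_curve :: "nat \<Rightarrow> (nat \<Rightarrow> real) \<Rightarrow> (nat \<Rightarrow> real) \<Rightarrow> real \<Rightarrow> real" where
  "beta_curve d g p x =
     (let \<pi> = (SOME \<pi>. beta_order d g p \<pi>);
          X = (\<lambda>k. \<Sum>i<k. g (\<pi> i));
          Y = (\<lambda>k. \<Sum>i<k. p (\<pi> i));
          k = (LEAST k. x \<le> X (Suc k))
      in Y k + (x - X k) * (Y (Suc k) - Y k) / (X (Suc k) - X k))"

definition tightly_thermomajorizes ::
  "nat \<Rightarrow> (nat \<Rightarrow> real) \<Rightarrow> (nat \<Rightarrow> real) \<Rightarrow> (nat \<Rightarrow> real) \<Rightarrow> bool" where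
  "tightly_thermomajorizes d g p r \<longleftrightarrow>
     (\<forall>\<pi>. beta_order d g r \<pi> \<longrightarrow>
        (\<forall>k. k + 2 \<le> d \<longrightarrow> elbow_y r \<pi> k = beta_curve d g p (elbow_x g \<pi> k)))"

end

theory Submission
  imports Defs
begin

lemma beta_order_exists: "\<exists>\<pi>. beta_order d g v \<pi>"
proof -
  define f where "f = (\<lambda>i. - (v i / g i))"
  define xs where "xs = sort_key f [0..<d]"
  have d: "distinct xs" "set xs = {..<d}" "length xs = d" by (auto simp: xs_def)
  have s: "sorted (map f xs)" by (simp add: xs_def)
  have b: "bij_betw ((!) xs) {..<d} {..<d}"
    using bij_betw_nth[OF d(1)] d by auto
  have m: "v (xs ! Suc k) / g (xs ! Suc k) \<le> v (xs ! k) / g (xs ! k)" if "Suc k < d" for k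
  proof -
    have "map f xs ! k \<le> map f xs ! Suc k"
      using sorted_nth_mono[OF s, of k "Suc k"] that d by auto
    then show ?thesis using that d by (simp add: f_def)
  qed
  show ?thesis unfolding beta_order_def using b m by blast
qed

locale thermo =
  fixes d :: nat and g p :: "nat \<Rightarrow> real"
  assumes d_pos: "1 \<le> d"
  and g_pos: "\<And>i. i < d \<Longrightarrow> 0 < g i"
  and g_sum: "(\<Sum>i<d. g i) = 1"
  and p_sum: "(\<Sum>i<d. p i) = 1"
begin

definition "\<pi>0 = (SOME \<pi>. beta_order d g p \<pi>)"
definition "Xs k = (\<Sum>i<k. g (\<pi>0 i))"
definition "Ys k = (\<Sum>i<k. p (\<pi>0 i))"
definition "sl k = p (\<pi>0 k) / g (\<pi>0 k)"
definition "L k x = Ys k + sl k * (x - Xs k)"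
abbreviation "F \<equiv> beta_curve d g p"

lemma bo0: "beta_order d g p \<pi>0"
  unfolding \<pi>0_def using beta_order_exists by (metis someI_ex)

lemma bij0: "bij_betw \<pi>0 {..<d} {..<d}" using bo0 beta_order_def by blast

lemma pi0_in: "k < d \<Longrightarrow> \<pi>0 k < d"
  using bij0 bij_betwE by blast

lemma gpi_pos: "k < d \<Longrightarrow> 0 < g (\<pi>0 k)" using pi0_in g_pos by blast

lemma Xs_Suc: "Xs (Suc k) = Xs k + g (\<pi>0 k)" by (simp add: Xs_def)
lemma Ys_Suc: "Ys (Suc k) = Ys k + p (\<pi>0 k)" by (simp add: Ys_def)
lemma Xs_0[simp]: "Xs 0 = 0" by (simp add: Xs_def)
lemma Ys_0[simp]: "Ys 0 = 0" by (simp add: Ys_def)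

lemma Xs_d: "Xs d = 1"
  unfolding Xs_def using sum.reindex_bij_betw[OF bij0, of g] g_sum by simp
lemma Ys_d: "Ys d = 1"
  unfolding Ys_def using sum.reindex_bij_betw[OF bij0, of p] p_sum by simp

lemma p_sl: "k < d \<Longrightarrow> p (\<pi>0 k) = sl k * g (\<pi>0 k)"
  using gpi_pos[of k] by (simp add: sl_def)

lemma Xs_mono: "m \<le> n \<Longrightarrow> n \<le> d \<Longrightarrow> Xs m \<le> Xs n"
proof (induction n rule: dec_induct)
  case base then show ?case by simp
next
  case (step n) then show ?case using gpi_pos[of n] by (simp add: Xs_Suc)
qed

lemma Xs_strict: "m < n \<Longrightarrow> n \<le> d \<Longrightarrow> Xs m < Xs n"
  using Xs_mono[of "Suc m" n] gpi_pos[of m] by (simp add: Xs_Suc)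

lemma Xs_range: "k \<le> d \<Longrightarrow> 0 \<le> Xs k \<and> Xs k \<le> 1"
  using Xs_mono[of 0 k] Xs_mono[of k d] Xs_d by simp

lemma sl_mono: "j \<le> i \<Longrightarrow> i < d \<Longrightarrow> sl i \<le> sl j"
proof (induction i rule: dec_induct)
  case base then show ?case by simp
next
  case (step n)
  then have "sl (Suc n) \<le> sl n" using bo0 unfolding beta_order_def sl_def by blast
  then show ?case using step by simp
qed

lemma Y_upper: "j \<le> m \<Longrightarrow> m \<le> d \<Longrightarrow> Ys m \<le> Ys j + sl j * (Xs m - Xs j)"
proof (induction m rule: dec_induct)
  case base then show ?case by simp
next
  case (step n)
  have "p (\<pi>0 n) \<le> sl j * g (\<pi>0 n)"
    using p_sl[of n] sl_mono[of j n] gpi_pos[of n] step by (simp add: mult_right_mono)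
  then show ?case using step by (simp add: Xs_Suc Ys_Suc algebra_simps)
qed

lemma Y_lower: "m \<le> j \<Longrightarrow> j < d \<Longrightarrow> Ys m \<le> Ys j - sl j * (Xs j - Xs m)"
proof (induction j rule: dec_induct)
  case base then show ?case by simp
next
  case (step n)
  have "sl (Suc n) * g (\<pi>0 n) \<le> p (\<pi>0 n)"
    using p_sl[of n] sl_mono[of n "Suc n"] gpi_pos[of n] step by (simp add: mult_right_mono)
  moreover have "sl (Suc n) * (Xs n - Xs m) \<le> sl n * (Xs n - Xs m)"
    using sl_mono[of n "Suc n"] step Xs_mono[of m n] by (simp add: mult_right_mono)
  ultimately show ?case using step by (simp add: Xs_Suc Ys_Suc algebra_simps)
qed

lemma L_ge_Y: "j < d \<Longrightarrow> m \<le> d \<Longrightarrow> Ys m \<le> L j (Xs m)"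
  unfolding L_def using Y_upper[of j m] Y_lower[of m j]
  by (cases "j \<le> m") (auto simp: algebra_simps)

lemma L_Xs: "L k (Xs k) = Ys k" by (simp add: L_def)
lemma L_Xs_Suc: "k < d \<Longrightarrow> L k (Xs (Suc k)) = Ys (Suc k)"
  using p_sl[of k] by (simp add: L_def Xs_Suc Ys_Suc)

lemma seg_min:
  assumes k: "k < d" and x: "Xs k \<le> x" "x \<le> Xs (Suc k)" and j: "j < d"
  shows "L k x \<le> L j x"
proof -
  define a where "a = Xs k"
  define b where "b = Xs (Suc k)"
  have ab: "a < b" using Xs_strict[of k "Suc k"] k by (simp add: a_def b_def)
  define t where "t = (x - a) / (b - a)"
  have tt: "t * (b - a) = x - a" using ab by (simp add: t_def)
  have xt: "x = (1 - t) * a + t * b" using tt by (simp add: algebra_simps)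
  have t01: "0 \<le> t" "t \<le> 1" using ab x by (auto simp: t_def a_def b_def field_simps)
  have aff: "\<And>i. L i x = (1 - t) * L i a + t * L i b"
    unfolding L_def xt by (simp add: algebra_simps)
  have "L k a \<le> L j a" using L_Xs[of k] L_ge_Y[OF j, of k] k by (simp add: a_def)
  moreover have "L k b \<le> L j b" using L_Xs_Suc[OF k] L_ge_Y[OF j, of "Suc k"] k by (simp add: b_def)
  ultimately show ?thesis unfolding aff using t01
    by (simp add: add_mono mult_left_mono)
qed

lemma F_least:
  assumes x: "0 \<le> x" "x \<le> 1"
  shows "\<exists>k<d. Xs k \<le> x \<and> x \<le> Xs (Suc k) \<and> F x = L k x"
proof -
  define k where "k = (LEAST k. x \<le> Xs (Suc k))"
  have ex: "x \<le> Xs (Suc (d - 1))" using Xs_d x d_pos by simp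
  have k1: "x \<le> Xs (Suc k)" unfolding k_def by (rule LeastI, rule ex)
  have k2: "k \<le> d - 1" unfolding k_def by (rule Least_le, rule ex)
  have k3: "Xs k \<le> x"
  proof (cases k)
    case 0 then show ?thesis using x by simp
  next
    case (Suc k')
    have "\<not> x \<le> Xs (Suc k')" using not_less_Least[of k' "\<lambda>k. x \<le> Xs (Suc k)"] Suc k_def by simp
    then show ?thesis using Suc by simp
  qed
  have kd: "k < d" using k2 d_pos by simp
  have "F x = L k x"
    unfolding beta_curve_def Let_def L_def sl_def
    apply (fold \<pi>0_def)
    apply (fold Xs_def Ys_def)
    apply (fold k_def)
    using gpi_pos[OF kd] by (simp add: Xs_Suc Ys_Suc)
  then show ?thesis using k1 k3 kd by blast
qed

lemma F_le_L: "0 \<le> x \<Longrightarrow> x \<le> 1 \<Longrightarrow> j < d \<Longrightarrow> F x \<le> L j x"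
  using F_least seg_min by metis

lemma F_seg: "k < d \<Longrightarrow> Xs k \<le> x \<Longrightarrow> x \<le> Xs (Suc k) \<Longrightarrow> F x = L k x"
proof -
  assume a: "k < d" "Xs k \<le> x" "x \<le> Xs (Suc k)"
  have x: "0 \<le> x" "x \<le> 1" using a Xs_range[of k] Xs_range[of "Suc k"] by auto
  obtain j where j: "j < d" "F x = L j x" using F_least[OF x] by blast
  show ?thesis using F_le_L[OF x a(1)] seg_min[OF a j(1)] j by simp
qed

lemma F_Xs: "m \<le> d \<Longrightarrow> F (Xs m) = Ys m"
proof (cases "m < d")
  case True then show ?thesis using F_seg[of m "Xs m"] Xs_mono[of m "Suc m"] L_Xs by simp
next
  case False
  assume "m \<le> d"
  then have "m = d" using False by simp
  then show ?thesis using F_seg[of "d - 1" "Xs d"] Xs_mono[of "d-1" d] L_Xs_Suc[of "d - 1"] d_pos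
    by simp
qed

lemma F0: "F 0 = 0" using F_Xs[of 0] by simp
lemma F1: "F 1 = 1" using F_Xs[of d] Xs_d Ys_d by simp

lemma concave3:
  assumes "0 \<le> u" "u \<le> v" "v \<le> w" "w \<le> 1"
  shows "(w - v) * F u + (v - u) * F w \<le> (w - u) * F v"
proof -
  obtain k where k: "k < d" "F v = L k v" using F_least[of v] assms by auto
  have "F u \<le> L k u" "F w \<le> L k w" using F_le_L k assms by auto
  then have "(w - v) * F u + (v - u) * F w \<le> (w - v) * L k u + (v - u) * L k w"
    using assms by (simp add: add_mono mult_left_mono)
  also have "\<dots> = (w - u) * L k v" by (simp add: L_def algebra_simps)
  finally show ?thesis using k by simp
qed

end

definition clamp :: "real \<Rightarrow> real \<Rightarrow> real" where "clamp t len = max 0 (min t len)"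

lemma clamp_mono: "a \<le> b \<Longrightarrow> clamp a len \<le> clamp b len"
  by (simp add: clamp_def)

lemma sum_split_at: "(k::nat) \<le> d \<Longrightarrow> (\<Sum>i<d. h i) = (\<Sum>i<k. h i) + (\<Sum>i\<in>{k..<d}. h i)"
proof -
  assume k: "k \<le> d"
  have "sum h {0..<k} + sum h {k..<d} = sum h {0..<d}"
    by (rule sum.atLeastLessThan_concat) (use k in auto)
  then show ?thesis by (simp add: atLeast0LessThan)
qed

context thermo begin

lemma knapsack:
  assumes w: "\<And>l. l < d \<Longrightarrow> 0 \<le> w l \<and> w l \<le> 1"
  shows "(\<Sum>l<d. w l * p l) \<le> F (\<Sum>l<d. w l * g l)"
proof -
  define W where "W = (\<Sum>l<d. w l * g l)"
  have W0: "0 \<le> W" unfolding W_def using w g_pos by (auto intro!: sum_nonneg simp: less_imp_le)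
  have "W \<le> (\<Sum>l<d. g l)" unfolding W_def
    using w g_pos by (intro sum_mono) (simp add: mult_left_le_one_le less_imp_le)
  then have W1: "W \<le> 1" using g_sum by simp
  obtain k where k: "k < d" "F W = L k W" using F_least[OF W0 W1] by blast
  define s where "s = sl k"
  have e1: "(\<Sum>l<d. w l * p l) = s * W + (\<Sum>l<d. w l * (p l - s * g l))"
    unfolding W_def by (simp add: sum_distrib_left sum.distrib[symmetric] algebra_simps)
  have e2: "(\<Sum>l<d. w l * (p l - s * g l)) \<le> (\<Sum>l<d. max (p l - s * g l) 0)"
  proof (rule sum_mono)
    fix l assume "l \<in> {..<d}"
    then have "0 \<le> w l" "w l \<le> 1" using w by auto
    then show "w l * (p l - s * g l) \<le> max (p l - s * g l) 0"
      by (cases "0 \<le> p l - s * g l") (auto simp: mult_left_le_one_le mult_nonneg_nonpos)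
  qed
  have e3: "(\<Sum>l<d. max (p l - s * g l) 0) = (\<Sum>i<d. max (p (\<pi>0 i) - s * g (\<pi>0 i)) 0)"
    using sum.reindex_bij_betw[OF bij0, of "\<lambda>l. max (p l - s * g l) 0"] by simp
  have e4: "(\<Sum>i<d. max (p (\<pi>0 i) - s * g (\<pi>0 i)) 0) = (\<Sum>i<k. p (\<pi>0 i) - s * g (\<pi>0 i))"
  proof -
    have "(\<Sum>i<d. max (p (\<pi>0 i) - s * g (\<pi>0 i)) 0)
        = (\<Sum>i<k. max (p (\<pi>0 i) - s * g (\<pi>0 i)) 0) + (\<Sum>i\<in>{k..<d}. max (p (\<pi>0 i) - s * g (\<pi>0 i)) 0)"
      using sum_split_at[of k d] k(1) by simp
    moreover have "(\<Sum>i<k. max (p (\<pi>0 i) - s * g (\<pi>0 i)) 0) = (\<Sum>i<k. p (\<pi>0 i) - s * g (\<pi>0 i))"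
    proof (rule sum.cong)
      fix i assume "i \<in> {..<k}"
      then have i: "i < k" by simp
      have "s \<le> sl i" using sl_mono[of i k] i k s_def by simp
      then have "s * g (\<pi>0 i) \<le> p (\<pi>0 i)" using p_sl[of i] i k gpi_pos[of i]
        by (simp add: mult_right_mono)
      then show "max (p (\<pi>0 i) - s * g (\<pi>0 i)) 0 = p (\<pi>0 i) - s * g (\<pi>0 i)" by simp
    qed simp
    moreover have "(\<Sum>i\<in>{k..<d}. max (p (\<pi>0 i) - s * g (\<pi>0 i)) 0) = 0"
    proof (rule sum.neutral, rule ballI)
      fix i assume "i \<in> {k..<d}"
      then have i: "k \<le> i" "i < d" by auto
      have "sl i \<le> s" using sl_mono[of k i] i s_def by simp
      then have "p (\<pi>0 i) \<le> s * g (\<pi>0 i)" using p_sl[of i] i gpi_pos[of i]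
        by (simp add: mult_right_mono)
      then show "max (p (\<pi>0 i) - s * g (\<pi>0 i)) 0 = 0" by simp
    qed
    ultimately show ?thesis by simp
  qed
  have e5: "(\<Sum>i<k. p (\<pi>0 i) - s * g (\<pi>0 i)) = Ys k - s * Xs k"
    by (simp add: Ys_def Xs_def sum_subtractf sum_distrib_left)
  have "(\<Sum>l<d. w l * p l) \<le> s * W + (Ys k - s * Xs k)"
    using e1 e2 e3 e4 e5 by simp
  also have "\<dots> = F W" using k by (simp add: L_def s_def algebra_simps)
  finally show ?thesis unfolding W_def .
qed

definition "Ainv l = Xs (inv_into {..<d} \<pi>0 l)"
definition "Phi v t = (\<Sum>j<d. clamp (t - Ainv j) (g j) * (v j / g j))"

lemma Ainv_pi0: "m < d \<Longrightarrow> Ainv (\<pi>0 m) = Xs m"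
  unfolding Ainv_def using bij_betw_inv_into_left[OF bij0] by simp

lemma Phi_reindex: "Phi v t = (\<Sum>m<d. clamp (t - Xs m) (g (\<pi>0 m)) * (v (\<pi>0 m) / g (\<pi>0 m)))"
  unfolding Phi_def
  using sum.reindex_bij_betw[OF bij0, of "\<lambda>j. clamp (t - Ainv j) (g j) * (v j / g j)"]
  by (simp add: Ainv_pi0)

lemma Phi_seg:
  assumes k: "k < d" and t: "Xs k \<le> t" "t \<le> Xs (Suc k)"
  shows "Phi v t = (\<Sum>i<k. v (\<pi>0 i)) + (t - Xs k) * (v (\<pi>0 k) / g (\<pi>0 k))"
proof -
  let ?h = "\<lambda>m. clamp (t - Xs m) (g (\<pi>0 m)) * (v (\<pi>0 m) / g (\<pi>0 m))"
  have s1: "(\<Sum>m<d. ?h m) = (\<Sum>m<Suc k. ?h m) + (\<Sum>m\<in>{Suc k..<d}. ?h m)"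
    using sum_split_at[of "Suc k" d ?h] k by simp
  have s2: "(\<Sum>m<k. ?h m) = (\<Sum>i<k. v (\<pi>0 i))"
  proof (rule sum.cong)
    fix m assume "m \<in> {..<k}"
    then have m: "m < k" by simp
    have "Xs (Suc m) \<le> Xs k" using Xs_mono[of "Suc m" k] m k by simp
    then have "g (\<pi>0 m) \<le> t - Xs m" using t Xs_Suc[of m] by simp
    then have "clamp (t - Xs m) (g (\<pi>0 m)) = g (\<pi>0 m)" using gpi_pos[of m] m k
      by (simp add: clamp_def)
    then show "?h m = v (\<pi>0 m)" using gpi_pos[of m] m k by simp
  qed simp
  have s3: "?h k = (t - Xs k) * (v (\<pi>0 k) / g (\<pi>0 k))"
    using t Xs_Suc[of k] by (simp add: clamp_def)
  have s4: "(\<Sum>m\<in>{Suc k..<d}. ?h m) = 0"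
  proof (rule sum.neutral, rule ballI)
    fix m assume "m \<in> {Suc k..<d}"
    then have "Xs (Suc k) \<le> Xs m" using Xs_mono[of "Suc k" m] by simp
    then have "t - Xs m \<le> 0" using t by simp
    then show "?h m = 0" using gpi_pos[of m] by (simp add: clamp_def)
  qed
  show ?thesis unfolding Phi_reindex using s1 s2 s3 s4 by simp
qed

lemma seg_exists: "0 \<le> t \<Longrightarrow> t \<le> 1 \<Longrightarrow> \<exists>k<d. Xs k \<le> t \<and> t \<le> Xs (Suc k) \<and> F t = L k t"
  using F_least by blast

lemma Phi_g: "0 \<le> t \<Longrightarrow> t \<le> 1 \<Longrightarrow> Phi g t = t"
proof -
  assume t: "0 \<le> t" "t \<le> 1"
  obtain k where k: "k < d" "Xs k \<le> t" "t \<le> Xs (Suc k)" using seg_exists[OF t] by blast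
  show ?thesis using Phi_seg[OF k, of g] gpi_pos[OF k(1)] by (simp add: Xs_def)
qed

lemma Phi_p: "0 \<le> t \<Longrightarrow> t \<le> 1 \<Longrightarrow> Phi p t = F t"
proof -
  assume t: "0 \<le> t" "t \<le> 1"
  obtain k where k: "k < d" "Xs k \<le> t" "t \<le> Xs (Suc k)" "F t = L k t" using seg_exists[OF t] by blast
  show ?thesis using Phi_seg[OF k(1-3), of p] k(4) by (simp add: Ys_def L_def sl_def algebra_simps)
qed

lemma Ainv_range: "j < d \<Longrightarrow> 0 \<le> Ainv j \<and> Ainv j + g j \<le> 1"
proof -
  assume j: "j < d"
  define m where "m = inv_into {..<d} \<pi>0 j"
  have m: "m < d" "\<pi>0 m = j" unfolding m_def
    using bij_betw_inv_into_right[OF bij0] inv_into_into[of j \<pi>0 "{..<d}"] bij0 j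
    by (auto simp: bij_betw_def)
  show ?thesis using Xs_range[of m] Xs_range[of "Suc m"] m Xs_Suc[of m]
    by (simp add: Ainv_def m_def[symmetric])
qed

lemma gen_range: "bij_betw \<sigma> {..<d} {..<d} \<Longrightarrow> m \<le> n \<Longrightarrow> n \<le> d \<Longrightarrow>
   0 \<le> (\<Sum>i<m. g (\<sigma> i)) \<and> (\<Sum>i<m. g (\<sigma> i)) \<le> (\<Sum>i<n. g (\<sigma> i)) \<and> (\<Sum>i<n. g (\<sigma> i)) \<le> 1"
proof -
  assume s: "bij_betw \<sigma> {..<d} {..<d}" and mn: "m \<le> n" "n \<le> d"
  have pos: "\<And>i. i < d \<Longrightarrow> 0 \<le> g (\<sigma> i)" using s g_pos bij_betwE less_imp_le by blast
  have tot: "(\<Sum>i<d. g (\<sigma> i)) = 1" using sum.reindex_bij_betw[OF s, of g] g_sum by simp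
  have a: "0 \<le> (\<Sum>i<m. g (\<sigma> i))" using pos mn by (intro sum_nonneg) auto
  have b: "(\<Sum>i<m. g (\<sigma> i)) \<le> (\<Sum>i<n. g (\<sigma> i))" using pos mn by (intro sum_mono2) auto
  have c: "(\<Sum>i<n. g (\<sigma> i)) \<le> (\<Sum>i<d. g (\<sigma> i))" using pos mn by (intro sum_mono2) auto
  show ?thesis using a b c tot by simp
qed

definition orbit where "orbit = TP_orbit d g p"

lemma vertex:
  assumes s: "bij_betw \<sigma> {..<d} {..<d}" and x0: "\<And>i. d \<le> i \<Longrightarrow> x i = 0"
    and pre: "\<And>m. m \<le> d \<Longrightarrow> (\<Sum>i<m. x (\<sigma> i)) = F (\<Sum>i<m. g (\<sigma> i))"
  shows "x \<in> orbit"
proof -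
  define Xg where "Xg m = (\<Sum>i<m. g (\<sigma> i))" for m
  define A where "A l = Xg (inv_into {..<d} \<sigma> l)" for l
  define T where "T i j = (clamp (A i + g i - Ainv j) (g j) - clamp (A i - Ainv j) (g j)) / g j" for i j
  have inv: "\<And>i. i < d \<Longrightarrow> inv_into {..<d} \<sigma> i < d \<and> \<sigma> (inv_into {..<d} \<sigma> i) = i"
    using bij_betw_inv_into_right[OF s] inv_into_into[of _ \<sigma> "{..<d}"] s
    by (auto simp: bij_betw_def)
  have inv2: "\<And>m. m < d \<Longrightarrow> inv_into {..<d} \<sigma> (\<sigma> m) = m"
    using bij_betw_inv_into_left[OF s] by simp
  have Aseg: "\<And>i. i < d \<Longrightarrow> A i + g i = Xg (Suc (inv_into {..<d} \<sigma> i))"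
    unfolding A_def Xg_def using inv by simp
  have Ar: "\<And>i. i < d \<Longrightarrow> 0 \<le> A i \<and> A i \<le> A i + g i \<and> A i + g i \<le> 1"
  proof -
    fix i assume i: "i < d"
    define m where "m = inv_into {..<d} \<sigma> i"
    have md: "m < d" using inv[OF i] m_def by simp
    have gr: "0 \<le> Xg m \<and> Xg m \<le> Xg (Suc m) \<and> Xg (Suc m) \<le> 1"
      unfolding Xg_def by (rule gen_range[OF s]) (use md in auto)
    have "A i = Xg m" by (simp add: A_def m_def)
    moreover have "A i + g i = Xg (Suc m)" using Aseg[OF i] m_def by simp
    ultimately show "0 \<le> A i \<and> A i \<le> A i + g i \<and> A i + g i \<le> 1" using gr by linarith
  qed
  have Tsum: "\<And>i v. (\<Sum>j<d. T i j * v j) = Phi v (A i + g i) - Phi v (A i)"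
    unfolding Phi_def T_def by (simp add: sum_subtractf[symmetric] diff_divide_distrib algebra_simps)
  have TP: "T \<in> TP d g"
    unfolding TP_def
  proof (intro CollectI conjI allI impI)
    fix i j assume "i < d" "j < d"
    then show "0 \<le> T i j" unfolding T_def using g_pos clamp_mono[of "A i - Ainv j" "A i + g i - Ainv j" "g j"]
      by (simp add: less_imp_le)
  next
    fix j assume j: "j < d"
    define c where "c t = clamp (t - Ainv j) (g j)" for t
    have "(\<Sum>i<d. T i j) = (\<Sum>i<d. c (A i + g i) - c (A i)) / g j"
      unfolding T_def c_def by (simp add: sum_divide_distrib)
    also have "(\<Sum>i<d. c (A i + g i) - c (A i)) = (\<Sum>m<d. c (A (\<sigma> m) + g (\<sigma> m)) - c (A (\<sigma> m)))"
      using sum.reindex_bij_betw[OF s, of "\<lambda>i. c (A i + g i) - c (A i)"] by simp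
    also have "\<dots> = (\<Sum>m<d. c (Xg (Suc m)) - c (Xg m))"
      by (rule sum.cong) (auto simp: A_def inv2 Xg_def)
    also have "\<dots> = c (Xg d) - c (Xg 0)" by (rule sum_lessThan_telescope)
    also have "\<dots> = g j"
      using Ainv_range[OF j] sum.reindex_bij_betw[OF s, of g] g_sum g_pos[OF j]
      by (simp add: c_def Xg_def clamp_def)
    finally show "(\<Sum>i<d. T i j) = 1" using g_pos[OF j] by simp
  next
    fix i assume i: "i < d"
    show "(\<Sum>j<d. T i j * g j) = g i" using Tsum[of i g] Phi_g Ar[OF i] by simp
  qed
  have "mat_app d T p = x"
  proof
    fix i
    show "mat_app d T p i = x i"
    proof (cases "i < d")
      case False then show ?thesis using x0 by (simp add: mat_app_def)
    next
      case True
      define m where "m = inv_into {..<d} \<sigma> i"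
      have m: "m < d" "\<sigma> m = i" using inv[OF True] m_def by auto
      have "mat_app d T p i = F (A i + g i) - F (A i)"
        using True Tsum[of i p] Phi_p Ar[OF True] by (simp add: mat_app_def)
      also have "\<dots> = F (Xg (Suc m)) - F (Xg m)" using Aseg[OF True] by (simp add: A_def m_def)
      also have "\<dots> = (\<Sum>i<Suc m. x (\<sigma> i)) - (\<Sum>i<m. x (\<sigma> i))"
        using pre[of m] pre[of "Suc m"] m by (simp add: Xg_def)
      also have "\<dots> = x i" using m by simp
      finally show ?thesis .
    qed
  qed
  then show ?thesis unfolding orbit_def TP_orbit_def using TP by blast
qed

lemma orbit_convex:
  assumes "a \<in> orbit" "b \<in> orbit" "0 \<le> u" "u \<le> 1"
  shows "(\<lambda>i. (1 - u) * a i + u * b i) \<in> orbit"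
proof -
  obtain T1 T2 where T: "T1 \<in> TP d g" "a = mat_app d T1 p" "T2 \<in> TP d g" "b = mat_app d T2 p"
    using assms unfolding orbit_def TP_orbit_def by blast
  define T where "T i j = (1 - u) * T1 i j + u * T2 i j" for i j
  have T1: "\<And>i j. i < d \<Longrightarrow> j < d \<Longrightarrow> 0 \<le> T1 i j" "\<And>j. j < d \<Longrightarrow> (\<Sum>i<d. T1 i j) = 1"
    "\<And>i. i < d \<Longrightarrow> (\<Sum>j<d. T1 i j * g j) = g i" using T(1) unfolding TP_def by auto
  have T2: "\<And>i j. i < d \<Longrightarrow> j < d \<Longrightarrow> 0 \<le> T2 i j" "\<And>j. j < d \<Longrightarrow> (\<Sum>i<d. T2 i j) = 1"
    "\<And>i. i < d \<Longrightarrow> (\<Sum>j<d. T2 i j * g j) = g i" using T(3) unfolding TP_def by auto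
  have TT: "T \<in> TP d g"
    unfolding TP_def
  proof (intro CollectI conjI allI impI)
    fix i j assume "i < d" "j < d"
    then show "0 \<le> T i j" using T1 T2 assms(3,4) by (simp add: T_def)
  next
    fix j assume j: "j < d"
    have "(\<Sum>i<d. T i j) = (1 - u) * (\<Sum>i<d. T1 i j) + u * (\<Sum>i<d. T2 i j)"
      unfolding T_def by (simp add: sum.distrib sum_distrib_left)
    then show "(\<Sum>i<d. T i j) = 1" using T1(2)[OF j] T2(2)[OF j] by simp
  next
    fix i assume i: "i < d"
    have "(\<Sum>j<d. T i j * g j) = (\<Sum>j<d. (1 - u) * (T1 i j * g j) + u * (T2 i j * g j))"
      by (rule sum.cong) (simp_all add: T_def algebra_simps)
    also have "\<dots> = (1 - u) * (\<Sum>j<d. T1 i j * g j) + u * (\<Sum>j<d. T2 i j * g j)"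
      by (simp add: sum.distrib sum_distrib_left)
    finally have "(\<Sum>j<d. T i j * g j) = (1 - u) * (\<Sum>j<d. T1 i j * g j) + u * (\<Sum>j<d. T2 i j * g j)" .
    then show "(\<Sum>j<d. T i j * g j) = g i" using T1(3)[OF i] T2(3)[OF i] by (simp add: algebra_simps)
  qed
  have MT: "mat_app d T p = (\<lambda>i. (1 - u) * a i + u * b i)"
  proof
    fix i
    show "mat_app d T p i = (1 - u) * a i + u * b i"
    proof (cases "i < d")
      case True
      have "(\<Sum>j<d. T i j * p j) = (\<Sum>j<d. (1 - u) * (T1 i j * p j) + u * (T2 i j * p j))"
        by (rule sum.cong) (simp_all add: T_def algebra_simps)
      also have "\<dots> = (1 - u) * (\<Sum>j<d. T1 i j * p j) + u * (\<Sum>j<d. T2 i j * p j)"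
        by (simp add: sum.distrib sum_distrib_left)
      finally show ?thesis using True by (simp add: T(2,4) mat_app_def)
    qed (simp add: T(2,4) mat_app_def)
  qed
  show ?thesis unfolding orbit_def TP_orbit_def
    by (intro CollectI exI[of _ T]) (simp add: TT MT)
qed

definition "inB x \<longleftrightarrow> (\<forall>i. d \<le> i \<longrightarrow> x i = 0) \<and> (\<Sum>i<d. x i) = 1 \<and>
   (\<forall>S. S \<subseteq> {..<d} \<longrightarrow> sum x S \<le> F (sum g S))"

lemma orbit_inB: "x \<in> orbit \<Longrightarrow> inB x"
proof -
  assume "x \<in> orbit"
  then obtain T where T: "T \<in> TP d g" "x = mat_app d T p" unfolding orbit_def TP_orbit_def by blast
  have nn: "\<And>i j. i < d \<Longrightarrow> j < d \<Longrightarrow> 0 \<le> T i j" and cs: "\<And>j. j < d \<Longrightarrow> (\<Sum>i<d. T i j) = 1"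
    and rs: "\<And>i. i < d \<Longrightarrow> (\<Sum>j<d. T i j * g j) = g i" using T(1) unfolding TP_def by auto
  have s: "sum x S = (\<Sum>j<d. (\<Sum>i\<in>S. T i j) * p j)" if "S \<subseteq> {..<d}" for S
  proof -
    have "sum x S = (\<Sum>i\<in>S. \<Sum>j<d. T i j * p j)"
      using that T(2) by (intro sum.cong) (auto simp: mat_app_def)
    also have "\<dots> = (\<Sum>j<d. (\<Sum>i\<in>S. T i j) * p j)"
      by (subst sum.swap) (simp add: sum_distrib_right)
    finally show ?thesis .
  qed
  have "(\<Sum>i<d. x i) = 1" using s[of "{..<d}"] cs p_sum by simp
  moreover have "sum x S \<le> F (sum g S)" if S: "S \<subseteq> {..<d}" for S
  proof -
    have fin: "finite S" using S finite_subset by blast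
    have w: "0 \<le> (\<Sum>i\<in>S. T i l) \<and> (\<Sum>i\<in>S. T i l) \<le> 1" if l: "l < d" for l
    proof
      show "0 \<le> (\<Sum>i\<in>S. T i l)" using S nn l by (intro sum_nonneg) auto
      have "(\<Sum>i\<in>S. T i l) \<le> (\<Sum>i<d. T i l)" using S nn l by (intro sum_mono2) auto
      then show "(\<Sum>i\<in>S. T i l) \<le> 1" using cs l by simp
    qed
    have gS: "(\<Sum>l<d. (\<Sum>i\<in>S. T i l) * g l) = sum g S"
    proof -
      have "(\<Sum>l<d. (\<Sum>i\<in>S. T i l) * g l) = (\<Sum>i\<in>S. \<Sum>l<d. T i l * g l)"
        by (subst sum.swap) (simp add: sum_distrib_right)
      also have "\<dots> = sum g S" using S rs by (intro sum.cong) auto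
      finally show ?thesis .
    qed
    show ?thesis using knapsack[of "\<lambda>l. \<Sum>i\<in>S. T i l", OF w] s[OF S] gS by simp
  qed
  moreover have "\<forall>i. d \<le> i \<longrightarrow> x i = 0" using T(2) by (simp add: mat_app_def)
  ultimately show "inB x" unfolding inB_def by blast
qed

end

lemma beta_order_mono:
  assumes "beta_order d g v \<pi>" "a \<le> b" "b < d"
  shows "v (\<pi> b) / g (\<pi> b) \<le> v (\<pi> a) / g (\<pi> a)"
  using assms(2,3)
proof (induction b rule: dec_induct)
  case base then show ?case by simp
next
  case (step n)
  then have "v (\<pi> (Suc n)) / g (\<pi> (Suc n)) \<le> v (\<pi> n) / g (\<pi> n)"
    using assms(1) unfolding beta_order_def by blast
  then show ?case using step by simp
qed

context thermo begin

definition "tight x S \<longleftrightarrow> sum x S = F (sum g S)"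

lemma gS_range: "S \<subseteq> {..<d} \<Longrightarrow> 0 \<le> sum g S \<and> sum g S \<le> 1"
proof -
  assume S: "S \<subseteq> {..<d}"
  have "0 \<le> sum g S" using S g_pos by (intro sum_nonneg) (auto simp: less_imp_le)
  moreover have "sum g S \<le> sum g {..<d}" using S g_pos by (intro sum_mono2) (auto simp: less_imp_le)
  ultimately show ?thesis using g_sum by simp
qed

lemma gS_mono: "A \<subseteq> B \<Longrightarrow> B \<subseteq> {..<d} \<Longrightarrow> sum g A \<le> sum g B"
  using g_pos by (intro sum_mono2) (auto intro: finite_subset simp: less_imp_le)

lemma submod:
  assumes A: "A \<subseteq> {..<d}" and B: "B \<subseteq> {..<d}"
  shows "F (sum g (A \<union> B)) + F (sum g (A \<inter> B)) \<le> F (sum g A) + F (sum g B)"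
proof -
  have fA: "finite A" and fB: "finite B" using A B finite_subset by blast+
  define a where "a = sum g (A \<inter> B)"
  define b where "b = sum g A"
  define c where "c = sum g B"
  define e where "e = sum g (A \<union> B)"
  have eq: "e + a = b + c" unfolding a_def b_def c_def e_def using sum.union_inter[OF fA fB] by simp
  have r: "0 \<le> a" "a \<le> b" "b \<le> e" "e \<le> 1" "a \<le> c" "c \<le> e"
    unfolding a_def b_def c_def e_def using A B gS_range[of "A \<inter> B"] gS_range[of "A \<union> B"]
    by (auto intro!: gS_mono)
  have h1: "(e - b) * F a + (b - a) * F e \<le> (e - a) * F b" using concave3[of a b e] r by simp
  have h2: "(e - c) * F a + (c - a) * F e \<le> (e - a) * F c" using concave3[of a c e] r by simp
  have "(e - b) * F a + (e - c) * F a = (e - a) * F a"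
    using eq by (simp add: distrib_right[symmetric])
  moreover have "(b - a) * F e + (c - a) * F e = (e - a) * F e"
    using eq by (simp add: distrib_right[symmetric])
  ultimately have "(e - a) * (F a + F e) \<le> (e - a) * (F b + F c)"
    using h1 h2 by (simp add: distrib_left)
  moreover have "e = a \<Longrightarrow> b = a \<and> c = a" using r by linarith
  ultimately have "F a + F e \<le> F b + F c"
    using r by (cases "e = a") (auto simp: mult_le_cancel_left)
  then show ?thesis unfolding a_def b_def c_def e_def by simp
qed

lemma tight_closed:
  assumes x: "inB x" and A: "A \<subseteq> {..<d}" "tight x A" and B: "B \<subseteq> {..<d}" "tight x B"
  shows "tight x (A \<union> B)" "tight x (A \<inter> B)"
proof -
  have fA: "finite A" and fB: "finite B" using A B finite_subset by blast+
  have le: "\<And>S. S \<subseteq> {..<d} \<Longrightarrow> sum x S \<le> F (sum g S)" using x unfolding inB_def by blast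
  have "sum x (A \<union> B) + sum x (A \<inter> B) = sum x A + sum x B" using sum.union_inter[OF fA fB] by simp
  moreover have "sum x A + sum x B = F (sum g A) + F (sum g B)" using A B unfolding tight_def by simp
  moreover have "sum x (A \<union> B) \<le> F (sum g (A \<union> B))" "sum x (A \<inter> B) \<le> F (sum g (A \<inter> B))"
    using le[of "A \<union> B"] le[of "A \<inter> B"] A(1) B(1) by auto
  moreover note submod[OF A(1) B(1)]
  ultimately show "tight x (A \<union> B)" "tight x (A \<inter> B)" unfolding tight_def by linarith+
qed

lemma tight_empty: "tight x {}" unfolding tight_def using F0 by simp

lemma tight_univ: "inB x \<Longrightarrow> tight x {..<d}" unfolding tight_def inB_def using F1 g_sum by simp

lemma exchange:
  assumes x: "inB x" and T: "T \<subseteq> {..<d}" "tight x T" and j: "j \<in> T" and i: "i < d" "i \<notin> T"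
    and rat: "x j / g j \<le> x i / g i"
  shows "tight x (insert i (T - {j}))"
proof -
  have fT: "finite T" using T finite_subset by blast
  have jd: "j < d" using j T by auto
  have gi: "0 < g i" using g_pos i by simp
  have gj: "0 < g j" using g_pos jd by simp
  have le: "\<And>S. S \<subseteq> {..<d} \<Longrightarrow> sum x S \<le> F (sum g S)" using x unfolding inB_def by blast
  define G where "G = sum g T"
  define FG where "FG = F G"
  define a where "a = G - g j"
  define c where "c = G + g i"
  define t where "t = a + g i"
  have sa: "sum g (T - {j}) = a" "sum x (T - {j}) = sum x T - x j"
    using sum_diff1[OF fT, of g j] sum_diff1[OF fT, of x j] j by (auto simp: a_def G_def)
  have sc: "sum g (insert i T) = c" "sum x (insert i T) = sum x T + x i"
    using sum.insert[OF fT i(2), of g] sum.insert[OF fT i(2), of x] by (auto simp: c_def G_def)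
  have st: "sum g (insert i (T - {j})) = t" "sum x (insert i (T - {j})) = sum x T - x j + x i"
    using sum.insert[of "T - {j}" i g] sum.insert[of "T - {j}" i x] fT i(2) sa by (auto simp: t_def)
  have xT: "sum x T = FG" using T(2) unfolding tight_def FG_def G_def .
  have ra: "0 \<le> a \<and> a \<le> 1" using gS_range[of "T - {j}"] T sa by auto
  have rc: "0 \<le> c \<and> c \<le> 1" using gS_range[of "insert i T"] T i sc by auto
  have rt: "0 \<le> t \<and> t \<le> 1" using gS_range[of "insert i (T - {j})"] T i st by auto
  have b1: "FG - x j \<le> F a" using le[of "T - {j}"] T sa xT by auto
  have b2: "FG + x i \<le> F c" using le[of "insert i T"] T i sc xT by auto
  have b3: "FG - x j + x i \<le> F t" using le[of "insert i (T - {j})"] T i st xT by auto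
  have conc: "g i * F a + g j * F c \<le> (g i + g j) * FG"
    using concave3[of a G c] ra rc gi gj unfolding a_def c_def FG_def by (simp add: algebra_simps)
  have r2: "x j * g i \<le> x i * g j" using rat gi gj by (simp add: field_simps)
  have m1: "g i * (FG - x j) \<le> g i * F a" using b1 gi by simp
  have m2: "g j * (FG + x i) \<le> g j * F c" using b2 gj by simp
  have eq1: "x j * g i = x i * g j" using conc m1 m2 r2 by (simp add: algebra_simps)
  have Fa: "F a = FG - x j"
  proof -
    have "g i * F a \<le> g i * (FG - x j)" using conc m2 eq1 by (simp add: algebra_simps)
    then have "F a \<le> FG - x j" using gi by simp
    then show ?thesis using b1 by simp
  qed
  have Fc: "F c = FG + x i"
  proof -
    have "g j * F c \<le> g j * (FG + x i)" using conc m1 eq1 by (simp add: algebra_simps)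
    then have "F c \<le> FG + x i" using gj by simp
    then show ?thesis using b2 by simp
  qed
  have "F t \<le> FG - x j + x i"
  proof (cases "g i \<le> g j")
    case True
    have c3: "(c - G) * F t + (G - t) * F c \<le> (c - t) * F G"
      using concave3[of t G c] rt rc True gi unfolding t_def a_def c_def by simp
    have "g i * F t \<le> g i * (FG - x j + x i)"
      using c3 Fc eq1 unfolding t_def a_def c_def FG_def by (simp add: algebra_simps)
    then show ?thesis using gi by simp
  next
    case False
    have c3: "(t - G) * F a + (G - a) * F t \<le> (t - a) * F G"
      using concave3[of a G t] rt ra False gj unfolding t_def a_def by simp
    have "g j * F t \<le> g j * (FG - x j + x i)"
      using c3 Fa eq1 unfolding t_def a_def c_def FG_def by (simp add: algebra_simps)
    then show ?thesis using gj by simp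
  qed
  then show ?thesis unfolding tight_def using st b3 xT by simp
qed

definition "sep x \<longleftrightarrow> (\<forall>i j. i < d \<longrightarrow> j < d \<longrightarrow> i \<noteq> j \<longrightarrow>
   (\<exists>S. S \<subseteq> {..<d} \<and> tight x S \<and> ((i \<in> S \<and> j \<notin> S) \<or> (j \<in> S \<and> i \<notin> S))))"

lemma upper_tight:
  assumes x: "inB x" and sp: "sep x" and P: "P \<subseteq> {..<d}"
    and up: "\<And>i j. i \<in> P \<Longrightarrow> j < d \<Longrightarrow> j \<notin> P \<Longrightarrow> x j / g j \<le> x i / g i"
  shows "tight x P"
proof -
  have fP: "finite P" using P finite_subset by blast
  have step1: "\<exists>W. W \<subseteq> {..<d} \<and> tight x W \<and> Q \<subseteq> W \<and> j \<notin> W"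
    if j: "j < d" "j \<notin> P" and Q: "Q \<subseteq> P" for j Q
  proof -
    have "finite Q" using Q fP finite_subset by blast
    then show ?thesis using Q
    proof (induction Q rule: finite_induct)
      case empty then show ?case using tight_empty by blast
    next
      case (insert i Q)
      then obtain W where W: "W \<subseteq> {..<d}" "tight x W" "Q \<subseteq> W" "j \<notin> W" by blast
      have iP: "i \<in> P" using insert by simp
      have id: "i < d" using iP P by auto
      have ij: "i \<noteq> j" using iP j by auto
      obtain S where S: "S \<subseteq> {..<d}" "tight x S" "(i \<in> S \<and> j \<notin> S) \<or> (j \<in> S \<and> i \<notin> S)"
        using sp id j(1) ij unfolding sep_def by blast
      obtain S' where S': "S' \<subseteq> {..<d}" "tight x S'" "i \<in> S'" "j \<notin> S'"
      proof (cases "i \<in> S \<and> j \<notin> S")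
        case True then show ?thesis using that S by blast
      next
        case False
        then have jS: "j \<in> S" "i \<notin> S" using S by auto
        have "tight x (insert i (S - {j}))"
          using exchange[OF x S(1) S(2) jS(1) id jS(2)] up[OF iP j] by simp
        moreover have "insert i (S - {j}) \<subseteq> {..<d}" using S id by auto
        ultimately show ?thesis using that ij by blast
      qed
      have "tight x (W \<union> S')" using tight_closed(1)[OF x W(1,2) S'(1,2)] .
      moreover have "W \<union> S' \<subseteq> {..<d}" using W S' by auto
      ultimately show ?case using W S' by blast
    qed
  qed
  have step2: "\<exists>W. W \<subseteq> {..<d} \<and> tight x W \<and> P \<subseteq> W \<and> W \<inter> Q = {}"
    if Q: "Q \<subseteq> {..<d} - P" for Q
  proof -
    have "finite Q" using Q finite_subset by blast
    then show ?thesis using Q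
    proof (induction Q rule: finite_induct)
      case empty then show ?case using tight_univ[OF x] P by blast
    next
      case (insert j Q)
      then obtain W where W: "W \<subseteq> {..<d}" "tight x W" "P \<subseteq> W" "W \<inter> Q = {}" by blast
      have j: "j < d" "j \<notin> P" using insert by auto
      obtain W' where W': "W' \<subseteq> {..<d}" "tight x W'" "P \<subseteq> W'" "j \<notin> W'"
        using step1[OF j, of P] by blast
      have "tight x (W \<inter> W')" using tight_closed(2)[OF x W(1,2) W'(1,2)] .
      then show ?case using W W' by blast
    qed
  qed
  obtain W where W: "W \<subseteq> {..<d}" "tight x W" "P \<subseteq> W" "W \<inter> ({..<d} - P) = {}"
    using step2[of "{..<d} - P"] by blast
  have "W = P" using W by blast
  then show ?thesis using W by simp
qed

definition "nt x = card {S. S \<subseteq> {..<d} \<and> \<not> tight x S}"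

definition shift :: "(nat \<Rightarrow> real) \<Rightarrow> nat \<Rightarrow> nat \<Rightarrow> real \<Rightarrow> nat \<Rightarrow> real" where "shift x i j t = (\<lambda>l. x l + (if l = i then t else 0) - (if l = j then t else 0))"

lemma sum_shift: "finite S \<Longrightarrow> sum (shift x i j t) S = sum x S + (if i \<in> S then t else 0) - (if j \<in> S then t else 0)"
proof -
  assume f: "finite S"
  have "sum (shift x i j t) S = sum (\<lambda>l. x l + (if l = i then t else 0)) S - sum (\<lambda>l. if l = j then t else 0) S"
    unfolding shift_def by (rule sum_subtractf)
  also have "\<dots> = sum x S + sum (\<lambda>l. if l = i then t else 0) S - sum (\<lambda>l. if l = j then t else 0) S"
    by (simp only: sum.distrib)
  finally show ?thesis using sum.delta[OF f, of i "\<lambda>_. t"] sum.delta[OF f, of j "\<lambda>_. t"] by simp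
qed

lemma half:
  assumes x: "inB x" and i: "i < d" and j: "j < d" and ij: "i \<noteq> j"
    and ns: "\<And>S. S \<subseteq> {..<d} \<Longrightarrow> tight x S \<Longrightarrow> (i \<in> S \<longleftrightarrow> j \<in> S)"
  shows "\<exists>t>0. inB (shift x i j t) \<and> nt (shift x i j t) < nt x"
proof -
  have le: "\<And>S. S \<subseteq> {..<d} \<Longrightarrow> sum x S \<le> F (sum g S)" using x unfolding inB_def by blast
  define fam where "fam = {S. S \<subseteq> {..<d} \<and> i \<in> S \<and> j \<notin> S}"
  define sl' where "sl' S = F (sum g S) - sum x S" for S
  have ffam: "finite fam" unfolding fam_def by (rule finite_subset[of _ "Pow {..<d}"]) auto
  have nfam: "{i} \<in> fam" using i ij unfolding fam_def by auto
  define t where "t = Min (sl' ` fam)"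
  have tin: "t \<in> sl' ` fam" unfolding t_def using ffam nfam by (intro Min_in) auto
  have tle: "\<And>S. S \<in> fam \<Longrightarrow> t \<le> sl' S" unfolding t_def using ffam by simp
  obtain S0 where S0: "S0 \<in> fam" "sl' S0 = t" using tin by blast
  have pos: "0 < sl' S" if "S \<in> fam" for S
  proof -
    have S: "S \<subseteq> {..<d}" "i \<in> S" "j \<notin> S" using that unfolding fam_def by auto
    have "\<not> tight x S" using ns[OF S(1)] S by blast
    then show ?thesis using le[OF S(1)] unfolding sl'_def tight_def by simp
  qed
  have t0: "0 < t" using pos[OF S0(1)] S0(2) by simp
  define y where "y = shift x i j t"
  have sy: "\<And>S. S \<subseteq> {..<d} \<Longrightarrow> sum y S = sum x S + (if i \<in> S then t else 0) - (if j \<in> S then t else 0)"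
  proof -
    fix S assume "S \<subseteq> {..<d}"
    then have "finite S" using finite_subset by blast
    then show "sum y S = sum x S + (if i \<in> S then t else 0) - (if j \<in> S then t else 0)"
      unfolding y_def by (rule sum_shift)
  qed
  have "inB y"
    unfolding inB_def
  proof (intro conjI allI impI)
    fix l assume "d \<le> l"
    then show "y l = 0" using x i j unfolding inB_def y_def shift_def by auto
  next
    show "(\<Sum>l<d. y l) = 1" using sy[of "{..<d}"] x i j unfolding inB_def by simp
  next
    fix S assume S: "S \<subseteq> {..<d}"
    show "sum y S \<le> F (sum g S)"
    proof (cases "i \<in> S \<and> j \<notin> S")
      case True
      then have "S \<in> fam" using S unfolding fam_def by auto
      then have "t \<le> sl' S" by (rule tle)
      then show ?thesis using sy[OF S] True unfolding sl'_def by simp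
    next
      case False
      then show ?thesis using sy[OF S] le[OF S] t0 by auto
    qed
  qed
  moreover have "nt y < nt x"
  proof -
    have sub: "{S. S \<subseteq> {..<d} \<and> \<not> tight y S} \<subseteq> {S. S \<subseteq> {..<d} \<and> \<not> tight x S}"
    proof safe
      fix S assume S: "S \<subseteq> {..<d}" and ny: "\<not> tight y S" and tx: "tight x S"
      have "i \<in> S \<longleftrightarrow> j \<in> S" using ns[OF S tx] .
      then have "sum y S = sum x S" using sy[OF S] by auto
      then show False using ny tx unfolding tight_def by simp
    qed
    have S0f: "S0 \<subseteq> {..<d}" "i \<in> S0" "j \<notin> S0" using S0 unfolding fam_def by auto
    have "\<not> tight x S0" using pos[OF S0(1)] S0f unfolding sl'_def tight_def by simp
    moreover have "tight y S0" using sy[OF S0f(1)] S0f S0(2) unfolding sl'_def tight_def by simp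
    ultimately have "S0 \<in> {S. S \<subseteq> {..<d} \<and> \<not> tight x S} - {S. S \<subseteq> {..<d} \<and> \<not> tight y S}"
      using S0f by auto
    then have ps: "{S. S \<subseteq> {..<d} \<and> \<not> tight y S} \<subset> {S. S \<subseteq> {..<d} \<and> \<not> tight x S}"
      using sub by blast
    have "finite {S. S \<subseteq> {..<d} \<and> \<not> tight x S}"
      by (rule finite_subset[of _ "Pow {..<d}"]) auto
    then show ?thesis unfolding nt_def using psubset_card_mono[OF _ ps] by blast
  qed
  ultimately show ?thesis using t0 unfolding y_def by blast
qed

lemma move:
  assumes x: "inB x" and i: "i < d" and j: "j < d" and ij: "i \<noteq> j"
    and ns: "\<And>S. S \<subseteq> {..<d} \<Longrightarrow> tight x S \<Longrightarrow> (i \<in> S \<longleftrightarrow> j \<in> S)"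
  shows "\<exists>y z u. inB y \<and> inB z \<and> y \<noteq> z \<and> 0 < u \<and> u < 1 \<and>
     x = (\<lambda>l. (1 - u) * y l + u * z l) \<and> nt y < nt x \<and> nt z < nt x"
proof -
  obtain t where t: "0 < t" "inB (shift x i j t)" "nt (shift x i j t) < nt x"
    using half[OF x i j ij ns] by blast
  obtain s where s: "0 < s" "inB (shift x j i s)" "nt (shift x j i s) < nt x"
    using half[OF x j i ij[symmetric]] ns by blast
  define u where "u = t / (s + t)"
  have u: "0 < u" "u < 1" using t(1) s(1) unfolding u_def by auto
  have ne: "shift x i j t \<noteq> shift x j i s"
  proof
    assume "shift x i j t = shift x j i s"
    then have "shift x i j t i = shift x j i s i" by simp
    then show False using ij t(1) s(1) unfolding shift_def by simp
  qed
  have u1: "1 - u = s / (s + t)" using t(1) s(1) unfolding u_def by (simp add: field_simps)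
  have "x = (\<lambda>l. (1 - u) * shift x i j t l + u * shift x j i s l)"
  proof
    fix l
    have "(1 - u) * shift x i j t l + u * shift x j i s l
        = (s * shift x i j t l + t * shift x j i s l) / (s + t)"
      unfolding u1 by (simp add: u_def add_divide_distrib)
    also have "s * shift x i j t l + t * shift x j i s l = (s + t) * x l"
      unfolding shift_def by (cases "l = i"; cases "l = j") (auto simp: algebra_simps)
    also have "(s + t) * x l / (s + t) = x l" using t(1) s(1) by simp
    finally show "x l = (1 - u) * shift x i j t l + u * shift x j i s l" by simp
  qed
  then show ?thesis using t s u ne by blast
qed

lemma sum_prefix: "bij_betw \<pi> {..<d} {..<d} \<Longrightarrow> m \<le> d \<Longrightarrow> sum v (\<pi> ` {..<m}) = (\<Sum>i<m. v (\<pi> i))"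
proof -
  assume b: "bij_betw \<pi> {..<d} {..<d}" and m: "m \<le> d"
  have "inj_on \<pi> {..<m}" using b m unfolding bij_betw_def by (auto intro: inj_on_subset)
  then show ?thesis by (simp add: sum.reindex)
qed

lemma prefix_sub: "bij_betw \<pi> {..<d} {..<d} \<Longrightarrow> m \<le> d \<Longrightarrow> \<pi> ` {..<m} \<subseteq> {..<d}"
  using bij_betwE by fastforce

lemma sep_prefix_tight:
  assumes x: "inB x" and sp: "sep x" and bo: "beta_order d g x \<pi>" and m: "m \<le> d"
  shows "(\<Sum>i<m. x (\<pi> i)) = F (\<Sum>i<m. g (\<pi> i))"
proof -
  have b: "bij_betw \<pi> {..<d} {..<d}" using bo unfolding beta_order_def by blast
  have "tight x (\<pi> ` {..<m})"
  proof (rule upper_tight[OF x sp prefix_sub[OF b m]])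
    fix i j assume i: "i \<in> \<pi> ` {..<m}" and j: "j < d" "j \<notin> \<pi> ` {..<m}"
    obtain a where a: "a < m" "i = \<pi> a" using i by auto
    obtain c where c: "c < d" "j = \<pi> c" using j b unfolding bij_betw_def by auto
    have "m \<le> c" using j c by (metis imageI lessThan_iff not_le)
    then show "x j / g j \<le> x i / g i" using beta_order_mono[OF bo, of a c] a c by simp
  qed
  then show ?thesis unfolding tight_def using sum_prefix[OF b m, of x] sum_prefix[OF b m, of g] by simp
qed

lemma inB_orbit: "inB x \<Longrightarrow> x \<in> orbit"
proof (induction "nt x" arbitrary: x rule: less_induct)
  case (less x)
  show ?case
  proof (cases "sep x")
    case True
    obtain \<pi> where bo: "beta_order d g x \<pi>" using beta_order_exists by blast
    have b: "bij_betw \<pi> {..<d} {..<d}" using bo unfolding beta_order_def by blast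
    show ?thesis
      by (rule vertex[OF b]) (use less.prems sep_prefix_tight[OF less.prems True bo] in \<open>auto simp: inB_def\<close>)
  next
    case False
    then obtain i j where ij: "i < d" "j < d" "i \<noteq> j"
      and ns: "\<And>S. S \<subseteq> {..<d} \<Longrightarrow> tight x S \<Longrightarrow> (i \<in> S \<longleftrightarrow> j \<in> S)"
      unfolding sep_def by blast
    obtain y z u where yz: "inB y" "inB z" "0 < u" "u < 1"
      "x = (\<lambda>l. (1 - u) * y l + u * z l)" "nt y < nt x" "nt z < nt x"
      using move[OF less.prems ij ns] by blast
    have "y \<in> orbit" "z \<in> orbit" using less.hyps yz by auto
    then show ?thesis using orbit_convex[of y z u] yz by simp
  qed
qed

end

context thermo begin

lemma main_loc:
  assumes r: "is_state d r"
  shows "is_extreme_point r orbit \<longleftrightarrow> tightly_thermomajorizes d g p r"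
proof
  assume ext: "is_extreme_point r orbit"
  have ro: "r \<in> orbit" using ext unfolding is_extreme_point_def by blast
  have rB: "inB r" using orbit_inB[OF ro] .
  have sp: "sep r"
  proof (rule ccontr)
    assume "\<not> sep r"
    then obtain i j where ij: "i < d" "j < d" "i \<noteq> j"
      and ns: "\<And>S. S \<subseteq> {..<d} \<Longrightarrow> tight r S \<Longrightarrow> (i \<in> S \<longleftrightarrow> j \<in> S)"
      unfolding sep_def by blast
    obtain y z u where yz: "inB y" "inB z" "y \<noteq> z" "0 < u" "u < 1"
      "r = (\<lambda>l. (1 - u) * y l + u * z l)"
      using move[OF rB ij ns] by blast
    have "y \<in> orbit" "z \<in> orbit" using inB_orbit yz by auto
    then show False using ext yz unfolding is_extreme_point_def by blast
  qed
  show "tightly_thermomajorizes d g p r"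
    unfolding tightly_thermomajorizes_def
  proof (intro allI impI)
    fix \<pi> k assume bo: "beta_order d g r \<pi>" and k: "k + 2 \<le> d"
    have "(\<Sum>i<Suc k. r (\<pi> i)) = F (\<Sum>i<Suc k. g (\<pi> i))"
      using sep_prefix_tight[OF rB sp bo, of "Suc k"] k by simp
    then show "elbow_y r \<pi> k = F (elbow_x g \<pi> k)"
      unfolding elbow_y_def elbow_x_def by (simp add: lessThan_Suc_atMost)
  qed
next
  assume tt: "tightly_thermomajorizes d g p r"
  obtain \<pi> where bo: "beta_order d g r \<pi>" using beta_order_exists by blast
  have b: "bij_betw \<pi> {..<d} {..<d}" using bo unfolding beta_order_def by blast
  have r0: "\<And>i. d \<le> i \<Longrightarrow> r i = 0" using r unfolding is_state_def by auto
  have rs: "(\<Sum>i<d. r i) = 1" using r unfolding is_state_def by auto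
  have pre: "(\<Sum>i<m. r (\<pi> i)) = F (\<Sum>i<m. g (\<pi> i))" if m: "m \<le> d" for m
  proof (cases "m = 0")
    case True then show ?thesis using F0 by simp
  next
    case False
    show ?thesis
    proof (cases "m = d")
      case True
      have "(\<Sum>i<d. r (\<pi> i)) = 1" using sum.reindex_bij_betw[OF b, of r] rs by simp
      moreover have "(\<Sum>i<d. g (\<pi> i)) = 1" using sum.reindex_bij_betw[OF b, of g] g_sum by simp
      ultimately show ?thesis using True F1 by simp
    next
      case False
      obtain k where mk: "m = Suc k" using \<open>m \<noteq> 0\<close> not0_implies_Suc by blast
      have "k + 2 \<le> d" using mk m False \<open>m \<noteq> d\<close> by simp
      then have "elbow_y r \<pi> k = F (elbow_x g \<pi> k)"
        using tt bo unfolding tightly_thermomajorizes_def by blast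
      then show ?thesis unfolding elbow_y_def elbow_x_def mk by (simp add: lessThan_Suc_atMost)
    qed
  qed
  have ro: "r \<in> orbit" by (rule vertex[OF b r0 pre])
  show "is_extreme_point r orbit"
    unfolding is_extreme_point_def
  proof (intro conjI ro notI)
    assume "\<exists>a\<in>orbit. \<exists>b\<in>orbit. a \<noteq> b \<and> (\<exists>u. 0 < u \<and> u < 1 \<and> r = (\<lambda>i. (1 - u) * a i + u * b i))"
    then obtain a c u where ac: "a \<in> orbit" "c \<in> orbit" "a \<noteq> c" "0 < u" "u < 1"
      "r = (\<lambda>i. (1 - u) * a i + u * c i)" by blast
    have aB: "inB a" and cB: "inB c" using orbit_inB ac by auto
    have eqm: "(\<Sum>i<m. a (\<pi> i)) = (\<Sum>i<m. c (\<pi> i))" if m: "m \<le> d" for m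
    proof -
      define A where "A = (\<Sum>i<m. a (\<pi> i))"
      define C where "C = (\<Sum>i<m. c (\<pi> i))"
      define Fm where "Fm = F (\<Sum>i<m. g (\<pi> i))"
      have "A \<le> Fm" using aB prefix_sub[OF b m] sum_prefix[OF b m, of a] sum_prefix[OF b m, of g]
        unfolding inB_def A_def Fm_def by metis
      moreover have "C \<le> Fm" using cB prefix_sub[OF b m] sum_prefix[OF b m, of c] sum_prefix[OF b m, of g]
        unfolding inB_def C_def Fm_def by metis
      moreover have "(1 - u) * A + u * C = Fm"
      proof -
        have "(\<Sum>i<m. r (\<pi> i)) = (1 - u) * A + u * C"
          unfolding A_def C_def ac(6) by (simp add: sum.distrib sum_distrib_left)
        then show ?thesis using pre[OF m] Fm_def by simp
      qed
      ultimately have "A = Fm \<and> C = Fm"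
      proof -
        assume h: "A \<le> Fm" "C \<le> Fm" "(1 - u) * A + u * C = Fm"
        have e: "(1 - u) * (Fm - A) + u * (Fm - C) = 0" using h(3) by (simp add: algebra_simps)
        have p1: "0 \<le> (1 - u) * (Fm - A)" using h ac by simp
        have p2: "0 \<le> u * (Fm - C)" using h ac by simp
        have "(1 - u) * (Fm - A) = 0" "u * (Fm - C) = 0" using e p1 p2 by linarith+
        then show ?thesis using ac by simp
      qed
      then show ?thesis unfolding A_def C_def by simp
    qed
    have "a = c"
    proof
      fix l
      show "a l = c l"
      proof (cases "l < d")
        case True
        obtain m where m: "m < d" "l = \<pi> m" using b True unfolding bij_betw_def by auto
        have "a (\<pi> m) = c (\<pi> m)" using eqm[of m] eqm[of "Suc m"] m by simp
        then show ?thesis using m by simp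
      next
        case False
        then show ?thesis using aB cB unfolding inB_def by simp
      qed
    qed
    then show False using ac by simp
  qed
qed

end

theorem mainTheorem2:
  fixes d :: nat and \<beta> :: real and E :: "nat \<Rightarrow> real" and p r :: "nat \<Rightarrow> real"
  assumes "d \<ge> 2" and "0 < \<beta>"
    and "E 0 = 0" and "inj_on E {..<d}"
    and "is_state d p" and "is_state d r"
  shows "is_extreme_point r (TP_orbit d (gibbs d \<beta> E) p)
     \<longleftrightarrow> tightly_thermomajorizes d (gibbs d \<beta> E) p r"
proof -
  define g where "g = gibbs d \<beta> E"
  have Z: "0 < partfun d \<beta> E"
    unfolding partfun_def qfac_def using assms(1) by (intro sum_pos) (auto simp: lessThan_empty_iff)
  have gp: "\<And>i. i < d \<Longrightarrow> 0 < g i" unfolding g_def gibbs_def qfac_def using Z by simp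
  have gs: "(\<Sum>i<d. g i) = 1"
  proof -
    have "(\<Sum>i<d. g i) = (\<Sum>i<d. qfac \<beta> E i 0) / partfun d \<beta> E"
      unfolding g_def gibbs_def by (simp add: sum_divide_distrib)
    then show ?thesis using Z by (simp add: partfun_def)
  qed
  have ps: "(\<Sum>i<d. p i) = 1" using assms(5) unfolding is_state_def by simp
  interpret th: thermo d g p using assms(1) gp gs ps by unfold_locales auto
  have "is_extreme_point r (TP_orbit d g p) \<longleftrightarrow> tightly_thermomajorizes d g p r"
    using th.main_loc[OF assms(6)] th.orbit_def by simp
  then show ?thesis unfolding g_def .
qed

end
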